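(* Let $A$ be an Archimedean semiprime $f$-algebra which is relatively uniformly complete. Then every intermediate algebra in $A$ (i.e., every subalgebra of $A$ containing $A_b$) is an order ideal of $A$.
   Context: An $f$-algebra is a real associative algebra that is a vector lattice with $A_+A_+\subseteq A_+$ and such that $a\wedge b=0$ implies $ac\wedge b=ca\wedge b=0$ for all $c\in A_+$; it is semiprime if $0$ is its only nilpotent element. $A_b=\{a\in A: a^2\le\mu|a|\text{ for some }\mu\in(0,\infty)\}$ is the set of bounded elements. An order ideal is a solid vector subspace. *)

theory Defs
  imports Complex_Main
begin

definition vabs :: "'a::{ordered_real_vector,lattice} \<Rightarrow> 'a" where
  "vabs a = sup a (- a)"

definition f_algebra :: "'a::{real_algebra,ordered_real_vector,lattice} itself \<Rightarrow> bool" where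
  "f_algebra _ \<longleftrightarrow>
     (\<forall>a b::'a. 0 \<le> a \<longrightarrow> 0 \<le> b \<longrightarrow> 0 \<le> a * b) \<and>
     (\<forall>a b c::'a. inf a b = 0 \<longrightarrow> 0 \<le> c \<longrightarrow> inf (a * c) b = 0 \<and> inf (c * a) b = 0)"

definition nilpotent :: "'a::real_algebra \<Rightarrow> bool" where
  "nilpotent a \<longleftrightarrow> (\<exists>n. (((*) a) ^^ n) a = 0)"   \<comment> \<open>a^(n+1) = 0\<close>

definition semiprime :: "'a::real_algebra itself \<Rightarrow> bool" where
  "semiprime _ \<longleftrightarrow> (\<forall>a::'a. nilpotent a \<longrightarrow> a = 0)"

definition archimedean_vl :: "'a::{ordered_real_vector,lattice} itself \<Rightarrow> bool" where
  "archimedean_vl _ \<longleftrightarrow>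
     (\<forall>a b::'a. 0 \<le> a \<longrightarrow> (\<forall>n::nat. real n *\<^sub>R a \<le> b) \<longrightarrow> a = 0)"

definition ru_cauchy :: "(nat \<Rightarrow> 'a::{ordered_real_vector,lattice}) \<Rightarrow> bool" where
  "ru_cauchy x \<longleftrightarrow> (\<exists>u\<ge>0. \<forall>\<epsilon>>0. \<exists>N. \<forall>m\<ge>N. \<forall>n\<ge>N. vabs (x m - x n) \<le> \<epsilon> *\<^sub>R u)"

definition ru_converges :: "(nat \<Rightarrow> 'a::{ordered_real_vector,lattice}) \<Rightarrow> 'a \<Rightarrow> bool" where
  "ru_converges x y \<longleftrightarrow> (\<exists>u\<ge>0. \<forall>\<epsilon>>0. \<exists>N. \<forall>n\<ge>N. vabs (x n - y) \<le> \<epsilon> *\<^sub>R u)"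

definition ru_complete :: "'a::{ordered_real_vector,lattice} itself \<Rightarrow> bool" where
  "ru_complete _ \<longleftrightarrow> (\<forall>x::nat \<Rightarrow> 'a. ru_cauchy x \<longrightarrow> (\<exists>y. ru_converges x y))"

definition bounded_elements :: "'a::{real_algebra,ordered_real_vector,lattice} set" where
  "bounded_elements = {a. \<exists>\<mu>>0. a * a \<le> \<mu> *\<^sub>R vabs a}"

definition subalgebra :: "'a::real_algebra set \<Rightarrow> bool" where
  "subalgebra B \<longleftrightarrow> 0 \<in> B \<and> (\<forall>a\<in>B. \<forall>b\<in>B. a + b \<in> B \<and> a * b \<in> B)
     \<and> (\<forall>a\<in>B. \<forall>r::real. r *\<^sub>R a \<in> B)"

definition order_ideal :: "'a::{ordered_real_vector,lattice} set \<Rightarrow> bool" where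
  "order_ideal B \<longleftrightarrow> 0 \<in> B \<and> (\<forall>a\<in>B. \<forall>b\<in>B. a + b \<in> B) \<and> (\<forall>a\<in>B. \<forall>r::real. r *\<^sub>R a \<in> B)
     \<and> (\<forall>a b. b \<in> B \<longrightarrow> vabs a \<le> vabs b \<longrightarrow> a \<in> B)"

end

theory Submission
  imports Defs
begin

definition ppos :: "'a::{ordered_ab_group_add,lattice} \<Rightarrow> 'a" where "ppos y = sup y 0"
definition pneg :: "'a::{ordered_ab_group_add,lattice} \<Rightarrow> 'a" where "pneg y = sup (- y) 0"

lemma add_inf_l: "(a::'a::{ordered_ab_group_add,lattice}) + inf b c = inf (a+b) (a+c)"
proof (rule antisym)
  show "a + inf b c \<le> inf (a+b) (a+c)" by (simp add: add_left_mono)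
  have "inf (a+b) (a+c) \<le> a + b" by simp
  hence "inf (a+b) (a+c) - a \<le> b" by (simp add: diff_le_eq add.commute)
  moreover have "inf (a+b) (a+c) \<le> a + c" by simp
  hence "inf (a+b) (a+c) - a \<le> c" by (simp add: diff_le_eq add.commute)
  ultimately have "inf (a+b) (a+c) - a \<le> inf b c" by simp
  then show "inf (a+b) (a+c) \<le> a + inf b c"
    by (metis diff_le_eq add.commute)
qed

lemma add_sup_l: "(a::'a::{ordered_ab_group_add,lattice}) + sup b c = sup (a+b) (a+c)"
proof (rule antisym)
  show "sup (a+b) (a+c) \<le> a + sup b c" by (simp add: add_left_mono)
  have "a + b \<le> sup (a+b) (a+c)" by simp
  hence "b \<le> sup (a+b) (a+c) - a" by (simp add: le_diff_eq add.commute)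
  moreover have "a + c \<le> sup (a+b) (a+c)" by simp
  hence "c \<le> sup (a+b) (a+c) - a" by (simp add: le_diff_eq add.commute)
  ultimately have "sup b c \<le> sup (a+b) (a+c) - a" by simp
  then show "a + sup b c \<le> sup (a+b) (a+c)"
    by (simp add: le_diff_eq add.commute)
qed

lemma neg_sup: "- sup (a::'a::{ordered_ab_group_add,lattice}) b = inf (-a) (-b)"
proof (rule antisym)
  show "- sup a b \<le> inf (-a) (-b)" by simp
  have "inf (-a) (-b) \<le> -a" "inf (-a) (-b) \<le> -b" by simp_all
  hence "a \<le> - inf (-a) (-b)" "b \<le> - inf (-a) (-b)" by (simp_all add: le_minus_iff)
  hence "sup a b \<le> - inf (-a) (-b)" by simp
  thus "inf (-a) (-b) \<le> - sup a b" by (simp add: le_minus_iff)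
qed

lemma neg_inf: "- inf (a::'a::{ordered_ab_group_add,lattice}) b = sup (-a) (-b)"
  by (metis minus_minus neg_sup)

lemma ppos_nonneg: "0 \<le> ppos y" by (simp add: ppos_def)
lemma pneg_nonneg: "0 \<le> pneg y" by (simp add: pneg_def)

lemma sup_plus_inf: "sup (a::'a::{ordered_ab_group_add,lattice}) b + inf a b = a + b"
proof -
  have "(a + b) - sup a b = (a+b) + inf (-a) (-b)" by (simp add: neg_sup)
  also have "... = inf b a" by (simp add: add_inf_l)
  finally show ?thesis by (metis add.commute diff_eq_eq inf.commute)
qed


lemma pos_minus_neg: "ppos y - pneg (y::'a::{ordered_ab_group_add,lattice}) = y"
proof -
  have "ppos y - pneg y = sup y 0 + inf y 0" by (simp add: ppos_def pneg_def neg_sup)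
  also have "... = y" by (simp add: sup_plus_inf)
  finally show ?thesis .
qed

lemma y_eq: "(y::'a::{ordered_ab_group_add,lattice}) = ppos y - pneg y" by (simp add: pos_minus_neg)

lemma inf_pos_neg: "inf (ppos y) (pneg (y::'a::{ordered_ab_group_add,lattice})) = 0"
proof -
  have "ppos y - inf (ppos y) (pneg y) = ppos y + sup (- ppos y) (- pneg y)" by (simp add: neg_inf)
  also have "... = sup (ppos y + - ppos y) (ppos y + - pneg y)" by (rule add_sup_l)
  also have "... = sup 0 (ppos y - pneg y)" by simp
  also have "... = sup 0 y" by (simp only: pos_minus_neg)
  also have "... = ppos y" by (simp add: ppos_def sup_commute)
  finally show ?thesis by simp
qed

lemma disj_nonneg: "inf a b = (0::'a::{ordered_ab_group_add,lattice}) \<Longrightarrow> 0 \<le> a \<and> 0 \<le> b"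
  by (metis inf.cobounded1 inf.cobounded2)

lemma sup_eq_plus_pos: "sup a b = b + ppos (a - (b::'a::{ordered_ab_group_add,lattice}))"
  by (simp add: ppos_def add_sup_l)

lemma ppos_disj: assumes "inf a b = (0::'a::{ordered_ab_group_add,lattice})"
  shows "ppos (a - b) = a" "pneg (a - b) = b"
proof -
  have "ppos (a - b) = a + sup (-b) (-a)" by (simp add: ppos_def add_sup_l)
  also have "... = a - inf b a" by (simp add: neg_inf)
  finally show "ppos (a - b) = a" using assms by (simp add: inf_commute)
  have "pneg (a - b) = b + sup (-a) (-b)" by (simp add: pneg_def add_sup_l)
  also have "... = b - inf a b" by (simp add: neg_inf)
  finally show "pneg (a - b) = b" using assms by simp
qed

lemma disj_add: assumes "0 \<le> u" "0 \<le> a" "0 \<le> b" "inf u a = 0" "inf u b = (0::'a::{ordered_ab_group_add,lattice})"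
  shows "inf u (a + b) = 0"
proof -
  define w where "w = inf u (a + b)"
  have w0: "0 \<le> w" using assms by (simp add: w_def add_nonneg_nonneg)
  have "w - inf u a = sup (w - u) (w - a)" by (simp only: diff_conv_add_uminus neg_inf add_sup_l)
  also have "... \<le> b"
  proof (rule sup_least)
    have "w \<le> u" by (simp add: w_def)
    hence "w - u \<le> 0" by simp
    thus "w - u \<le> b" using assms(3) by (rule order_trans)
    have "w \<le> a + b" by (simp add: w_def)
    thus "w - a \<le> b" by (simp add: diff_le_eq add.commute)
  qed
  finally have "w \<le> b" using assms by simp
  moreover have "w \<le> u" by (simp add: w_def)
  ultimately have "w \<le> inf u b" by simp
  with assms w0 show ?thesis unfolding w_def by (metis antisym)
qed

lemma vabs_pos_neg: "vabs (y::'a::{ordered_real_vector,lattice}) = ppos y + pneg y"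
proof -
  have "ppos y + pneg y = sup (y + pneg y) (pneg y)" by (simp add: ppos_def add_sup_l add.commute)
  also have "y + pneg y = sup 0 y" by (simp add: pneg_def add_sup_l sup_commute)
  finally have e: "ppos y + pneg y = sup (sup 0 y) (sup (-y) 0)" by (simp add: pneg_def)
  have "0 \<le> sup y (-y)"
  proof -
    have "y + -y \<le> sup y (-y) + sup y (-y)" by (rule add_mono) simp_all
    hence "0 \<le> sup y (-y) + sup y (-y)" by simp
    hence "0 \<le> (2::real) *\<^sub>R sup y (-y)" by (simp add: scaleR_2)
    hence "0 \<le> (1/2::real) *\<^sub>R ((2::real) *\<^sub>R sup y (-y))" by (simp only: scaleR_nonneg_nonneg)
    thus ?thesis by (simp only: scaleR_scaleR) simp
  qed
  hence "sup (sup 0 y) (sup (-y) 0) = sup y (-y)"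
    by (metis sup.absorb1 sup.left_commute sup_assoc sup_commute)
  with e show ?thesis by (simp add: vabs_def)
qed

lemma vabs_nonneg: "0 \<le> vabs (y::'a::{ordered_real_vector,lattice})"
  by (simp add: vabs_pos_neg ppos_nonneg pneg_nonneg add_nonneg_nonneg)

lemma vabs_le: "(y::'a::{ordered_real_vector,lattice}) \<le> w \<Longrightarrow> -y \<le> w \<Longrightarrow> vabs y \<le> w"
  by (simp add: vabs_def)

lemma vabs_ge: "(y::'a::{ordered_real_vector,lattice}) \<le> vabs y" "- y \<le> vabs y"
  by (simp_all add: vabs_def)

lemma vabs_id: "0 \<le> (y::'a::{ordered_real_vector,lattice}) \<Longrightarrow> vabs y = y"
  by (simp add: vabs_def sup_absorb1 order_trans[of "-y" 0 y])


section \<open>f-algebra layer\<close>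

lemma fa_pos: assumes "f_algebra TYPE('a::{real_algebra,ordered_real_vector,lattice})"
  shows "0 \<le> (a::'a) \<Longrightarrow> 0 \<le> b \<Longrightarrow> 0 \<le> a * b"
  using assms by (simp add: f_algebra_def)

lemma fa_disj: assumes "f_algebra TYPE('a::{real_algebra,ordered_real_vector,lattice})"
  shows "inf (a::'a) b = 0 \<Longrightarrow> 0 \<le> c \<Longrightarrow> inf (a * c) b = 0 \<and> inf (c * a) b = 0"
  using assms unfolding f_algebra_def by blast

lemma fa_mono_l: assumes F: "f_algebra TYPE('a::{real_algebra,ordered_real_vector,lattice})"
  and "0 \<le> (z::'a)" "a \<le> b" shows "z * a \<le> z * b"
proof -
  have "0 \<le> z * (b - a)" using fa_pos[OF F] assms by simp
  thus ?thesis by (simp add: right_diff_distrib)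
qed

lemma fa_mono_r: assumes F: "f_algebra TYPE('a::{real_algebra,ordered_real_vector,lattice})"
  and "0 \<le> (z::'a)" "a \<le> b" shows "a * z \<le> b * z"
proof -
  have "0 \<le> (b - a) * z" using fa_pos[OF F] assms by simp
  thus ?thesis by (simp add: left_diff_distrib)
qed

lemma fa_disj_prod: assumes F: "f_algebra TYPE('a::{real_algebra,ordered_real_vector,lattice})"
  and d: "inf (a::'a) b = 0" shows "a * b = 0"
proof -
  have a0: "0 \<le> a" and b0: "0 \<le> b" using disj_nonneg[OF d] by auto
  have "inf (a * b) b = 0" using fa_disj[OF F d b0] by simp
  hence "inf b (a * b) = 0" by (simp add: inf_commute)
  hence "inf (a * b) (a * b) = 0" using fa_disj[OF F _ a0] by blast
  thus ?thesis by simp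
qed

lemma fa_disj_prod': assumes F: "f_algebra TYPE('a::{real_algebra,ordered_real_vector,lattice})"
  and d: "inf (a::'a) b = 0" shows "b * a = 0"
  using fa_disj_prod[OF F] d by (simp add: inf_commute)

lemma fa_lhom: assumes F: "f_algebra TYPE('a::{real_algebra,ordered_real_vector,lattice})"
  and z: "0 \<le> (z::'a)" shows "z * ppos y = ppos (z * y)" "z * pneg y = pneg (z * y)"
proof -
  have d: "inf (ppos y) (pneg y) = 0" by (rule inf_pos_neg)
  have "inf (z * ppos y) (pneg y) = 0" using fa_disj[OF F d z] by simp
  hence "inf (pneg y) (z * ppos y) = 0" by (simp add: inf_commute)
  hence "inf (z * pneg y) (z * ppos y) = 0" using fa_disj[OF F _ z] by blast
  hence d2: "inf (z * ppos y) (z * pneg y) = 0" by (simp add: inf_commute)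
  have e: "z * y = z * ppos y - z * pneg y" by (metis pos_minus_neg right_diff_distrib)
  show "z * ppos y = ppos (z * y)" "z * pneg y = pneg (z * y)" using ppos_disj[OF d2] e by simp_all
qed

lemma fa_rhom: assumes F: "f_algebra TYPE('a::{real_algebra,ordered_real_vector,lattice})"
  and z: "0 \<le> (z::'a)" shows "ppos y * z = ppos (y * z)" "pneg y * z = pneg (y * z)"
proof -
  have d: "inf (ppos y) (pneg y) = 0" by (rule inf_pos_neg)
  have "inf (ppos y * z) (pneg y) = 0" using fa_disj[OF F d z] by simp
  hence "inf (pneg y) (ppos y * z) = 0" by (simp add: inf_commute)
  hence "inf (pneg y * z) (ppos y * z) = 0" using fa_disj[OF F _ z] by blast
  hence d2: "inf (ppos y * z) (pneg y * z) = 0" by (simp add: inf_commute)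
  have e: "y * z = ppos y * z - pneg y * z" by (metis pos_minus_neg left_diff_distrib)
  show "ppos y * z = ppos (y * z)" "pneg y * z = pneg (y * z)" using ppos_disj[OF d2] e by simp_all
qed

lemma fa_square_abs: assumes F: "f_algebra TYPE('a::{real_algebra,ordered_real_vector,lattice})"
  shows "(y::'a) * y = vabs y * vabs y"
proof -
  have d: "inf (ppos y) (pneg y) = 0" by (rule inf_pos_neg)
  have p1: "ppos y * pneg y = 0" using fa_disj_prod[OF F d] .
  have p2: "pneg y * ppos y = 0" using fa_disj_prod'[OF F d] .
  have "y * y = (ppos y - pneg y) * (ppos y - pneg y)" by (simp add: pos_minus_neg)
  also have "... = ppos y * ppos y + pneg y * pneg y" using p1 p2 by (simp add: algebra_simps)
  also have "... = (ppos y + pneg y) * (ppos y + pneg y)" using p1 p2 by (simp add: algebra_simps)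
  finally show ?thesis by (simp add: vabs_pos_neg)
qed

lemma fa_semiprime: assumes F: "f_algebra TYPE('a::{real_algebra,ordered_real_vector,lattice})"
  and S: "semiprime TYPE('a)"
  and z: "0 \<le> (z::'a)" and e: "0 \<le> e" and ze: "z * e = 0"
  shows "inf z e = 0"
proof -
  define m where "m = inf z e"
  have m0: "0 \<le> m" using z e by (simp add: m_def)
  have "m * m \<le> z * m" using fa_mono_r[OF F m0] by (simp add: m_def)
  also have "... \<le> z * e" using fa_mono_l[OF F z] by (simp add: m_def)
  finally have "m * m \<le> 0" using ze by simp
  moreover have "0 \<le> m * m" using fa_pos[OF F m0 m0] .
  ultimately have "m * m = 0" by simp
  hence "nilpotent m" unfolding nilpotent_def by (intro exI[of _ 1]) simp
  thus ?thesis using S unfolding semiprime_def m_def by blast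
qed

lemma fa_P: assumes F: "f_algebra TYPE('a::{real_algebra,ordered_real_vector,lattice})"
  and S: "semiprime TYPE('a)"
  and z: "0 \<le> (z::'a)" and zd: "z * d \<le> 0" and g: "0 \<le> g" and dg: "d \<le> z * g"
  shows "d \<le> 0"
proof -
  define e where "e = ppos d"
  have e0: "0 \<le> e" by (simp add: e_def ppos_nonneg)
  have "z * e = ppos (z * d)" using fa_lhom[OF F z] by (simp add: e_def)
  also have "... = 0" using zd by (simp add: ppos_def sup_absorb2)
  finally have "inf z e = 0" using fa_semiprime[OF F S z e0] by simp
  hence "inf (z * g) e = 0" using fa_disj[OF F _ g] by blast
  moreover have "e \<le> z * g" unfolding e_def ppos_def using dg fa_pos[OF F z g] by simp
  ultimately have "e = 0" by (metis inf.absorb2 inf_commute)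
  hence "ppos d = 0" by (simp add: e_def)
  thus ?thesis by (metis ppos_def sup.cobounded1)
qed


section \<open>The operator y + s y\<close>

definition Tm :: "'a::real_algebra \<Rightarrow> 'a \<Rightarrow> 'a" where "Tm s y = y + s * y"

lemma Tm_diff: "Tm s (a - b) = Tm s a - Tm s b" by (simp add: Tm_def algebra_simps)
lemma Tm_add: "Tm s (a + b) = Tm s a + Tm s b" by (simp add: Tm_def algebra_simps)
lemma Tm_scale: "Tm s (r *\<^sub>R a) = r *\<^sub>R Tm s a" by (simp add: Tm_def scaleR_right_distrib)
lemma Tm_zero: "Tm s 0 = 0" by (simp add: Tm_def)
lemma Tm_minus: "Tm s (- a) = - Tm s a" by (simp add: Tm_def)

lemma Tm_nonneg: assumes F: "f_algebra TYPE('a::{real_algebra,ordered_real_vector,lattice})"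
  and s: "0 \<le> (s::'a)" and y: "0 \<le> y" shows "0 \<le> Tm s y"
  unfolding Tm_def using fa_pos[OF F s y] y by simp

lemma Tm_mono: assumes F: "f_algebra TYPE('a::{real_algebra,ordered_real_vector,lattice})"
  and s: "0 \<le> (s::'a)" and le: "a \<le> b" shows "Tm s a \<le> Tm s b"
proof -
  have "0 \<le> Tm s (b - a)" using Tm_nonneg[OF F s] le by simp
  thus ?thesis by (simp add: Tm_diff)
qed

lemma Tm_hom: assumes F: "f_algebra TYPE('a::{real_algebra,ordered_real_vector,lattice})"
  and s: "0 \<le> (s::'a)" shows "Tm s (ppos y) = ppos (Tm s y)" "Tm s (pneg y) = pneg (Tm s y)"
proof -
  define p where "p = ppos y"
  define n where "n = pneg y"
  have p0: "0 \<le> p" and n0: "0 \<le> n" by (simp_all add: p_def n_def ppos_nonneg pneg_nonneg)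
  have sp0: "0 \<le> s * p" and sn0: "0 \<le> s * n" using fa_pos[OF F s] p0 n0 by auto
  have d: "inf p n = 0" unfolding p_def n_def by (rule inf_pos_neg)
  have d1: "inf (s * p) n = 0" using fa_disj[OF F d s] by simp
  have d2: "inf (s * n) p = 0" using fa_disj[OF F _ s] d by (simp add: inf_commute)
  have "inf n (s * p) = 0" using d1 by (simp add: inf_commute)
  hence d3: "inf (s * n) (s * p) = 0" using fa_disj[OF F _ s] by blast
  have e1: "inf n (p + s * p) = 0"
    by (rule disj_add) (use n0 p0 sp0 d d1 in \<open>simp_all add: inf_commute\<close>)
  have e2: "inf (s * n) (p + s * p) = 0"
    by (rule disj_add) (use sn0 p0 sp0 d2 d3 in \<open>simp_all add: inf_commute\<close>)
  have "inf (p + s * p) (n + s * n) = 0"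
    by (rule disj_add) (use n0 p0 sp0 sn0 e1 e2 in \<open>simp_all add: inf_commute add_nonneg_nonneg\<close>)
  hence d4: "inf (Tm s p) (Tm s n) = 0" by (simp add: Tm_def)
  have "Tm s y = Tm s p - Tm s n" unfolding p_def n_def by (metis Tm_diff pos_minus_neg)
  thus "Tm s (ppos y) = ppos (Tm s y)" "Tm s (pneg y) = pneg (Tm s y)"
    using ppos_disj[OF d4] by (simp_all add: p_def n_def)
qed

lemma Tm_reflect: assumes F: "f_algebra TYPE('a::{real_algebra,ordered_real_vector,lattice})"
  and s: "0 \<le> (s::'a)" and le: "Tm s a \<le> Tm s b" shows "a \<le> b"
proof -
  define d where "d = a - b"
  have "Tm s d \<le> 0" using le by (simp add: d_def Tm_diff)
  hence "ppos (Tm s d) = 0" by (simp add: ppos_def sup_absorb2)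
  hence "Tm s (ppos d) = 0" using Tm_hom[OF F s] by simp
  hence z: "ppos d + s * ppos d = 0" by (simp add: Tm_def)
  have "0 \<le> s * ppos d" using fa_pos[OF F s ppos_nonneg] .
  hence "ppos d \<le> ppos d + s * ppos d" by simp
  hence "ppos d \<le> 0" using z by simp
  hence "ppos d = 0" using ppos_nonneg[of d] by simp
  hence "d \<le> 0" by (metis ppos_def sup.cobounded1)
  thus ?thesis by (simp add: d_def)
qed

lemma Tm_inj: assumes F: "f_algebra TYPE('a::{real_algebra,ordered_real_vector,lattice})"
  and s: "0 \<le> (s::'a)" and eq: "Tm s a = Tm s b" shows "a = b"
  using Tm_reflect[OF F s] eq by (metis antisym order_refl)

lemma Tm_sup: assumes F: "f_algebra TYPE('a::{real_algebra,ordered_real_vector,lattice})"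
  and s: "0 \<le> (s::'a)" shows "Tm s (sup a b) = sup (Tm s a) (Tm s b)"
  by (simp add: sup_eq_plus_pos[of a b] sup_eq_plus_pos[of "Tm s a"] Tm_add Tm_hom[OF F s] Tm_diff)

lemma Tm_inf: assumes F: "f_algebra TYPE('a::{real_algebra,ordered_real_vector,lattice})"
  and s: "0 \<le> (s::'a)" shows "Tm s (inf a b) = inf (Tm s a) (Tm s b)"
proof -
  have "inf a b = a + b - sup a b" by (metis sup_plus_inf add_diff_cancel_left')
  moreover have "inf (Tm s a) (Tm s b) = Tm s a + Tm s b - sup (Tm s a) (Tm s b)"
    by (metis sup_plus_inf add_diff_cancel_left')
  ultimately show ?thesis by (simp add: Tm_diff Tm_add Tm_sup[OF F s])
qed

lemma Tm_abs: assumes F: "f_algebra TYPE('a::{real_algebra,ordered_real_vector,lattice})"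
  and s: "0 \<le> (s::'a)" shows "Tm s (vabs y) = vabs (Tm s y)"
  by (simp add: vabs_pos_neg Tm_add Tm_hom[OF F s])


section \<open>Bisection\<close>

definition bstep :: "'a::{real_algebra,ordered_real_vector,lattice} \<Rightarrow> 'a \<Rightarrow> 'a \<times> 'a \<Rightarrow> 'a \<times> 'a" where
  "bstep s x p = (let M = (1/2::real) *\<^sub>R (fst p + snd p); f = Tm s M - x in
     (sup (fst p) (M - ppos f), inf (snd p) (M + pneg f)))"

lemma half_mid1: "(1/2::real) *\<^sub>R ((L::'a::real_vector) + U) = L + (1/2::real) *\<^sub>R (U - L)"
proof -
  have "L - (1/2::real) *\<^sub>R L = (1/2::real) *\<^sub>R L" using scaleR_left_diff_distrib[of 1 "1/2" L] by simp
  then show ?thesis by (simp add: scaleR_right_distrib scaleR_right_diff_distrib algebra_simps)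
qed

lemma half_mid2: "(1/2::real) *\<^sub>R ((L::'a::real_vector) + U) = U - (1/2::real) *\<^sub>R (U - L)"
proof -
  have "U - (1/2::real) *\<^sub>R U = (1/2::real) *\<^sub>R U" using scaleR_left_diff_distrib[of 1 "1/2" U] by simp
  then show ?thesis by (simp add: scaleR_right_distrib scaleR_right_diff_distrib algebra_simps)
qed

lemma bstep_props:
  assumes F: "f_algebra TYPE('a::{real_algebra,ordered_real_vector,lattice})"
  and s: "0 \<le> (s::'a)" and LU: "L \<le> U" and TL: "Tm s L \<le> x" and TU: "x \<le> Tm s U"
  and st: "bstep s x (L, U) = (L', U')"
  shows "L \<le> L'" "U' \<le> U" "L' \<le> U'" "Tm s L' \<le> x" "x \<le> Tm s U'"
    "U' - L' \<le> (1/2::real) *\<^sub>R (U - L)"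
proof -
  define M where "M = (1/2::real) *\<^sub>R (L + U)"
  define f where "f = Tm s M - x"
  define h where "h = (1/2::real) *\<^sub>R (U - L)"
  have Ldef: "L' = sup L (M - ppos f)" and Udef: "U' = inf U (M + pneg f)"
    using st by (simp_all add: bstep_def M_def f_def Let_def)
  have h0: "0 \<le> h" unfolding h_def using LU by (simp add: scaleR_nonneg_nonneg)
  have hML: "M = L + h" unfolding M_def h_def by (rule half_mid1)
  have hMU: "M = U - h" unfolding M_def h_def by (rule half_mid2)
  show "L \<le> L'" unfolding Ldef by simp
  show "U' \<le> U" unfolding Udef by simp
  have LM: "L \<le> M" using hML h0 by simp
  have MU2: "M \<le> U" using hMU h0 by simp
  show "L' \<le> U'" unfolding Ldef Udef
  proof (intro sup_least le_infI)
    show "L \<le> U" by fact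
    have a1: "M - ppos f \<le> M" using ppos_nonneg[of f] by simp
    have a2: "M \<le> M + pneg f" using pneg_nonneg[of f] by simp
    show "L \<le> M + pneg f" using LM a2 by (rule order_trans)
    show "M - ppos f \<le> U" using a1 MU2 by (rule order_trans)
    show "M - ppos f \<le> M + pneg f" using a1 a2 by (rule order_trans)
  qed
  have f_le: "f \<le> ppos f" by (simp add: ppos_def)
  have Tpf: "ppos f \<le> Tm s (ppos f)" unfolding Tm_def using fa_pos[OF F s ppos_nonneg] by simp
  have "Tm s (M - ppos f) \<le> x"
  proof -
    have "Tm s (M - ppos f) = Tm s M - Tm s (ppos f)" by (simp add: Tm_diff)
    also have "... \<le> Tm s M - f" using order_trans[OF f_le Tpf] by (rule diff_left_mono)
    also have "... = x" by (simp add: f_def)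
    finally show ?thesis .
  qed
  moreover have "Tm s L' = sup (Tm s L) (Tm s (M - ppos f))" unfolding Ldef by (rule Tm_sup[OF F s])
  ultimately show "Tm s L' \<le> x" using TL by simp
  have f_ge: "- f \<le> pneg f" by (simp add: pneg_def)
  have Tnf: "pneg f \<le> Tm s (pneg f)" unfolding Tm_def using fa_pos[OF F s pneg_nonneg] by simp
  have "x \<le> Tm s (M + pneg f)"
  proof -
    have "x = Tm s M - f" by (simp add: f_def)
    also have "... = Tm s M + - f" by simp
    also have "... \<le> Tm s M + Tm s (pneg f)" using order_trans[OF f_ge Tnf] by (rule add_left_mono)
    also have "... = Tm s (M + pneg f)" by (simp add: Tm_add)
    finally show ?thesis .
  qed
  moreover have "Tm s U' = inf (Tm s U) (Tm s (M + pneg f))" unfolding Udef by (rule Tm_inf[OF F s])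
  ultimately show "x \<le> Tm s U'" using TU by simp
  have g1: "U' - L' \<le> h + pneg f"
  proof -
    have "U' \<le> M + pneg f" unfolding Udef by simp
    moreover have "L \<le> L'" unfolding Ldef by simp
    ultimately have "U' - L' \<le> M + pneg f - L" by (rule diff_mono)
    also have "... = h + pneg f" using hML by simp
    finally show ?thesis .
  qed
  have g2: "U' - L' \<le> h + ppos f"
  proof -
    have "U' \<le> U" unfolding Udef by simp
    moreover have "M - ppos f \<le> L'" unfolding Ldef by simp
    ultimately have "U' - L' \<le> U - (M - ppos f)" by (rule diff_mono)
    also have "... = h + ppos f" using hMU by simp
    finally show ?thesis .
  qed
  have "U' - L' \<le> inf (h + pneg f) (h + ppos f)" using g1 g2 by simp
  also have "... = h + inf (pneg f) (ppos f)" by (simp only: add_inf_l)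
  also have "... = h" using inf_pos_neg[of f] by (simp add: inf_commute)
  finally show "U' - L' \<le> (1/2::real) *\<^sub>R (U - L)" by (simp add: h_def)
qed


definition bis :: "'a::{real_algebra,ordered_real_vector,lattice} \<Rightarrow> 'a \<Rightarrow> nat \<Rightarrow> 'a \<times> 'a" where
  "bis s x n = (bstep s x ^^ n) (- vabs x, vabs x)"

lemma bis_inv:
  assumes F: "f_algebra TYPE('a::{real_algebra,ordered_real_vector,lattice})"
  and s: "0 \<le> (s::'a)"
  shows "fst (bis s x n) \<le> snd (bis s x n) \<and> Tm s (fst (bis s x n)) \<le> x \<and> x \<le> Tm s (snd (bis s x n))
    \<and> snd (bis s x n) - fst (bis s x n) \<le> ((1/2::real)^n) *\<^sub>R (2 *\<^sub>R vabs x)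
    \<and> fst (bis s x n) \<le> fst (bis s x (Suc n)) \<and> snd (bis s x (Suc n)) \<le> snd (bis s x n)"
proof (induction n)
  case 0
  have v0: "0 \<le> vabs x" by (rule vabs_nonneg)
  have a1: "- vabs x \<le> vabs x" using v0 by (meson neg_le_0_iff_le order_trans)
  have "Tm s (- vabs x) = - vabs x - s * vabs x" by (simp add: Tm_def)
  also have "... \<le> - vabs x" using fa_pos[OF F s v0] by simp
  also have "... \<le> x" using vabs_ge(2)[of x] by (simp add: minus_le_iff)
  finally have a2: "Tm s (- vabs x) \<le> x" .
  have "x \<le> vabs x" by (rule vabs_ge(1))
  also have "vabs x \<le> Tm s (vabs x)" unfolding Tm_def using fa_pos[OF F s v0] by simp
  finally have a3: "x \<le> Tm s (vabs x)" .
  have a4: "vabs x - - vabs x = 2 *\<^sub>R vabs x" by (simp add: scaleR_2)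
  obtain L' U' where st: "bstep s x (- vabs x, vabs x) = (L', U')" by fastforce
  note P = bstep_props[OF F s a1 a2 a3 st]
  show ?case using a1 a2 a3 a4 P(1,2) st by (simp add: bis_def)
next
  case (Suc n)
  obtain L U where LU: "bis s x n = (L, U)" by fastforce
  obtain L' U' where st: "bstep s x (L, U) = (L', U')" by fastforce
  obtain L'' U'' where st2: "bstep s x (L', U') = (L'', U'')" by fastforce
  have bS: "bis s x (Suc n) = (L', U')" using LU st by (simp add: bis_def)
  have bSS: "bis s x (Suc (Suc n)) = (L'', U'')" using bS st2 by (simp add: bis_def)
  have IH: "L \<le> U" "Tm s L \<le> x" "x \<le> Tm s U" "U - L \<le> ((1/2::real)^n) *\<^sub>R (2 *\<^sub>R vabs x)"
    using Suc.IH LU by auto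
  note P = bstep_props[OF F s IH(1-3) st]
  note P2 = bstep_props[OF F s P(3-5) st2]
  have "U' - L' \<le> (1/2::real) *\<^sub>R (U - L)" by (rule P(6))
  also have "... \<le> (1/2::real) *\<^sub>R (((1/2::real)^n) *\<^sub>R (2 *\<^sub>R vabs x))"
    using IH(4) by (rule scaleR_left_mono) simp
  also have "... = ((1/2::real)^(Suc n)) *\<^sub>R (2 *\<^sub>R vabs x)" by simp
  finally have g: "U' - L' \<le> ((1/2::real)^(Suc n)) *\<^sub>R (2 *\<^sub>R vabs x)" .
  show ?case unfolding bS bSS using P(3-5) g P2(1,2) by simp
qed

lemma ru_lower:
  assumes A: "archimedean_vl TYPE('a::{real_algebra,ordered_real_vector,lattice})"
  and c: "ru_converges y (H::'a)" and le: "\<forall>m\<ge>N. a \<le> y m"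
  shows "a \<le> H"
proof -
  obtain u where u0: "0 \<le> u" and P: "\<forall>\<epsilon>>0. \<exists>N. \<forall>n\<ge>N. vabs (y n - H) \<le> \<epsilon> *\<^sub>R u"
    using c unfolding ru_converges_def by blast
  define p where "p = ppos (a - H)"
  have p0: "0 \<le> p" by (simp add: p_def ppos_nonneg)
  have "\<forall>k::nat. real k *\<^sub>R p \<le> u"
  proof
    fix k :: nat
    define \<epsilon> where "\<epsilon> = 1 / (real k + 1)"
    have e0: "\<epsilon> > 0" by (simp add: \<epsilon>_def)
    obtain N' where N': "\<forall>n\<ge>N'. vabs (y n - H) \<le> \<epsilon> *\<^sub>R u" using P e0 by blast
    define m where "m = max N N'"
    have "a - H \<le> y m - H" using le by (simp add: m_def)
    also have "... \<le> vabs (y m - H)" by (rule vabs_ge(1))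
    also have "... \<le> \<epsilon> *\<^sub>R u" using N' by (simp add: m_def)
    finally have "a - H \<le> \<epsilon> *\<^sub>R u" .
    moreover have "0 \<le> \<epsilon> *\<^sub>R u" using e0 u0 by (simp add: scaleR_nonneg_nonneg)
    ultimately have pe: "p \<le> \<epsilon> *\<^sub>R u" by (simp add: p_def ppos_def)
    have "real k *\<^sub>R p \<le> (real k + 1) *\<^sub>R p" using p0 by (intro scaleR_right_mono) simp_all
    also have "... \<le> (real k + 1) *\<^sub>R (\<epsilon> *\<^sub>R u)" using pe by (rule scaleR_left_mono) simp
    also have "... = u" by (simp add: \<epsilon>_def)
    finally show "real k *\<^sub>R p \<le> u" .
  qed
  hence "p = 0" using A p0 unfolding archimedean_vl_def by blast
  thus ?thesis by (metis p_def ppos_def sup.cobounded1 diff_le_0_iff_le)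
qed

lemma vabs_neg: "vabs (- (y::'a::{ordered_real_vector,lattice})) = vabs y"
  by (simp add: vabs_def sup_commute)

lemma ru_upper:
  assumes A: "archimedean_vl TYPE('a::{real_algebra,ordered_real_vector,lattice})"
  and c: "ru_converges y (H::'a)" and le: "\<forall>m\<ge>N. y m \<le> a"
  shows "H \<le> a"
proof -
  have "ru_converges (\<lambda>n. - y n) (- H)"
  proof -
    have "\<And>n. vabs (- y n - - H) = vabs (y n - H)" by (metis minus_diff_eq vabs_neg diff_conv_add_uminus add.commute minus_minus)
    thus ?thesis using c unfolding ru_converges_def by simp
  qed
  moreover have "\<forall>m\<ge>N. - a \<le> - y m" using le by simp
  ultimately have "- a \<le> - H" by (rule ru_lower[OF A])
  thus ?thesis by simp
qed


lemma vabs_zero: "vabs (w::'a::{ordered_real_vector,lattice}) = 0 \<Longrightarrow> w = 0"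
proof -
  assume "vabs w = 0"
  hence "ppos w + pneg w = 0" by (simp add: vabs_pos_neg)
  hence "ppos w = 0" "pneg w = 0" using ppos_nonneg[of w] pneg_nonneg[of w]
    by (simp_all add: add_nonneg_eq_0_iff)
  thus "w = 0" by (metis pos_minus_neg diff_self)
qed

lemma solve:
  assumes F: "f_algebra TYPE('a::{real_algebra,ordered_real_vector,lattice})"
  and A: "archimedean_vl TYPE('a)" and C: "ru_complete TYPE('a)"
  and s: "0 \<le> (s::'a)"
  shows "\<exists>v. Tm s v = x"
proof -
  define Lb where "Lb n = fst (bis s x n)" for n
  define Ub where "Ub n = snd (bis s x n)" for n
  define g where "g = 2 *\<^sub>R vabs x"
  have g0: "0 \<le> g" unfolding g_def using vabs_nonneg[of x] by (simp add: scaleR_nonneg_nonneg)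
  note I = bis_inv[OF F s, of x, folded Lb_def Ub_def g_def]
  have Lmono: "n \<le> m \<Longrightarrow> Lb n \<le> Lb m" for n m
    by (rule lift_Suc_mono_le[of Lb]) (use I in auto)
  have Umono: "n \<le> m \<Longrightarrow> Ub m \<le> Ub n" for n m
    by (rule lift_Suc_antimono_le[of Ub]) (use I in auto)
  have LU: "Lb m \<le> Ub n" for m n
  proof -
    have "Lb m \<le> Lb (max m n)" by (rule Lmono) simp
    also have "... \<le> Ub (max m n)" using I by blast
    also have "... \<le> Ub n" by (rule Umono) simp
    finally show ?thesis .
  qed
  have "ru_cauchy Lb"
    unfolding ru_cauchy_def
  proof (intro exI[of _ g] conjI allI impI)
    show "0 \<le> g" by (rule g0)
    fix \<epsilon> :: real assume e: "\<epsilon> > 0"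
    obtain N where N: "(1/2::real)^N < \<epsilon>" using real_arch_pow_inv[OF e, of "1/2"] by auto
    show "\<exists>N. \<forall>m\<ge>N. \<forall>n\<ge>N. vabs (Lb m - Lb n) \<le> \<epsilon> *\<^sub>R g"
    proof (intro exI[of _ N] allI impI)
      fix m n assume m: "N \<le> m" and n: "N \<le> n"
      have gap: "Ub N - Lb N \<le> \<epsilon> *\<^sub>R g"
      proof -
        have "Ub N - Lb N \<le> ((1/2::real)^N) *\<^sub>R g" using I by blast
        also have "... \<le> \<epsilon> *\<^sub>R g" using N g0 by (intro scaleR_right_mono) simp_all
        finally show ?thesis .
      qed
      have "Lb m - Lb n \<le> Ub N - Lb N" using LU[of m N] Lmono[OF n] by (simp add: diff_mono)
      moreover have "- (Lb m - Lb n) \<le> Ub N - Lb N" using LU[of n N] Lmono[OF m] by (simp add: diff_mono)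
      ultimately show "vabs (Lb m - Lb n) \<le> \<epsilon> *\<^sub>R g" using gap by (meson vabs_le order_trans)
    qed
  qed
  then obtain H where H: "ru_converges Lb H" using C unfolding ru_complete_def by blast
  have LH: "Lb n \<le> H" for n
    by (rule ru_lower[OF A H, of n]) (use Lmono in auto)
  have HU: "H \<le> Ub n" for n
    by (rule ru_upper[OF A H, of 0]) (use LU in auto)
  define w where "w = vabs (Tm s H - x)"
  define G where "G = Tm s g"
  have w0: "0 \<le> w" by (simp add: w_def vabs_nonneg)
  have wb: "w \<le> ((1/2::real)^n) *\<^sub>R G" for n
  proof -
    have TL: "Tm s (Lb n) \<le> x" and TU: "x \<le> Tm s (Ub n)" using I by blast+
    have TLH: "Tm s (Lb n) \<le> Tm s H" by (rule Tm_mono[OF F s LH])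
    have THU: "Tm s H \<le> Tm s (Ub n)" by (rule Tm_mono[OF F s HU])
    have "Tm s (Ub n) - Tm s (Lb n) = Tm s (Ub n - Lb n)" by (simp add: Tm_diff)
    also have "... \<le> Tm s (((1/2::real)^n) *\<^sub>R g)" using I by (intro Tm_mono[OF F s]) blast
    also have "... = ((1/2::real)^n) *\<^sub>R G" by (simp add: Tm_scale G_def)
    finally have d: "Tm s (Ub n) - Tm s (Lb n) \<le> ((1/2::real)^n) *\<^sub>R G" .
    have "Tm s H - x \<le> Tm s (Ub n) - Tm s (Lb n)" using THU TL by (rule diff_mono)
    moreover have "- (Tm s H - x) \<le> Tm s (Ub n) - Tm s (Lb n)" using TU TLH by (simp add: diff_mono)
    ultimately show ?thesis unfolding w_def using d by (meson vabs_le order_trans)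
  qed
  have "\<forall>n::nat. real n *\<^sub>R w \<le> G"
  proof
    fix n :: nat
    have "real n \<le> (2::real)^n" using less_exp[of n] by (metis of_nat_le_iff of_nat_numeral of_nat_power less_imp_le)
    hence "real n *\<^sub>R w \<le> ((2::real)^n) *\<^sub>R w" using w0 by (rule scaleR_right_mono)
    also have "... \<le> ((2::real)^n) *\<^sub>R (((1/2::real)^n) *\<^sub>R G)" using wb[of n] by (rule scaleR_left_mono) simp
    also have "... = G" by (simp add: power_one_over[symmetric] power_mult_distrib[symmetric])
    finally show "real n *\<^sub>R w \<le> G" .
  qed
  hence "w = 0" using A w0 unfolding archimedean_vl_def by blast
  hence "Tm s H = x" unfolding w_def using vabs_zero by fastforce
  thus ?thesis by blast
qed


lemma q_bounded:
  assumes F: "f_algebra TYPE('a::{real_algebra,ordered_real_vector,lattice})"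
  and S: "semiprime TYPE('a)"
  and c0: "0 \<le> (c::'a)" and q0: "0 \<le> q" and cq: "c * q = q * c" and eq: "q + (c * c) * q = c"
  shows "q * q \<le> q"
proof -
  have ccq0: "0 \<le> (c * c) * q" using fa_pos[OF F fa_pos[OF F c0 c0] q0] .
  have qc: "q \<le> c" using eq ccq0 by (metis le_add_same_cancel1)
  have ccqc: "(c * c) * q \<le> c" using eq q0 by (metis le_add_same_cancel2)
  have qq0: "0 \<le> q * q" using fa_pos[OF F q0 q0] .
  have qq_cq: "q * q \<le> c * q" using fa_mono_l[OF F q0 qc] cq by simp
  have "q * ((c * c) * q) \<le> q * c" by (rule fa_mono_l[OF F q0 ccqc])
  moreover have "q * ((c * c) * q) = c * (c * (q * q))"
    by (metis cq mult.assoc)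
  ultimately have "c * (c * (q * q)) \<le> c * q" using cq by simp
  hence "c * (c * (q * q) - q) \<le> 0" by (simp add: right_diff_distrib)
  moreover have "c * (q * q) - q \<le> c * (q * q)" using q0 by simp
  ultimately have "c * (q * q) - q \<le> 0" using fa_P[OF F S c0 _ qq0] by blast
  hence cqq: "c * (q * q) \<le> q" by simp
  have "(q * q) * (q * q) \<le> (c * q) * (q * q)" by (rule fa_mono_r[OF F qq0 qq_cq])
  also have "... = (c * (q * q)) * q" by (simp add: mult.assoc)
  also have "... \<le> q * q" by (rule fa_mono_r[OF F q0 cqq])
  finally have q4: "(q * q) * (q * q) \<le> q * q" .
  define z where "z = q + q * q"
  have z0: "0 \<le> z" using q0 qq0 by (simp add: z_def)
  have "z * (q * q - q) = (q * q) * (q * q) - q * q"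
    by (simp add: z_def algebra_simps)
  hence zd: "z * (q * q - q) \<le> 0" using q4 by simp
  have "q * q - q \<le> q * q" using q0 by simp
  also have "... \<le> z * q" using fa_pos[OF F qq0 q0] by (simp add: z_def distrib_right)
  finally have "q * q - q \<le> z * q" .
  hence "q * q - q \<le> 0" using fa_P[OF F S z0 zd q0] by blast
  thus ?thesis by simp
qed

lemma dom_bounded:
  assumes F: "f_algebra TYPE('a::{real_algebra,ordered_real_vector,lattice})"
  and S: "semiprime TYPE('a)"
  and y0: "0 \<le> (y::'a)" and yq: "y \<le> q" and qq: "q * q \<le> q"
  shows "y * y \<le> y"
proof -
  have q0: "0 \<le> q" using y0 yq by simp
  have "y * y \<le> q * y" by (rule fa_mono_r[OF F y0 yq])
  also have "q * y \<le> y"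
  proof -
    have "q * (q * y - y) = (q * q) * y - q * y" by (simp add: algebra_simps)
    also have "... \<le> 0" using fa_mono_r[OF F y0 qq] by simp
    finally have zd: "q * (q * y - y) \<le> 0" .
    have "q * y - y \<le> q * y" using y0 by simp
    hence "q * y - y \<le> 0" using fa_P[OF F S q0 zd y0] by blast
    thus ?thesis by simp
  qed
  finally show ?thesis .
qed

theorem corollary9:
  fixes B :: "'a::{real_algebra,ordered_real_vector,lattice} set"
  assumes "f_algebra TYPE('a)"
    and "archimedean_vl TYPE('a)"
    and "semiprime TYPE('a)"
    and "ru_complete TYPE('a)"
    and "subalgebra B"
    and "bounded_elements \<subseteq> B"
  shows "order_ideal B"
proof -
  note F = assms(1) and A = assms(2) and S = assms(3) and C = assms(4)
  have B0: "0 \<in> B" and Badd: "\<And>a b. a \<in> B \<Longrightarrow> b \<in> B \<Longrightarrow> a + b \<in> B"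
    and Bmul: "\<And>a b. a \<in> B \<Longrightarrow> b \<in> B \<Longrightarrow> a * b \<in> B"
    and Bsc: "\<And>a r. a \<in> B \<Longrightarrow> r *\<^sub>R a \<in> B"
    using assms(5) unfolding subalgebra_def by blast+
  have solid: "a \<in> B" if bB: "b \<in> B" and ab: "vabs a \<le> vabs b" for a b
  proof -
    define c where "c = vabs b"
    define s where "s = b * b"
    have c0: "0 \<le> c" by (simp add: c_def vabs_nonneg)
    have sc: "s = c * c" unfolding s_def c_def by (rule fa_square_abs[OF F])
    have s0: "0 \<le> s" unfolding sc using fa_pos[OF F c0 c0] .
    obtain v where v: "Tm s v = a" using solve[OF F A C s0] by blast
    obtain q where q: "Tm s q = c" using solve[OF F A C s0] by blast
    have "Tm s (vabs v) = vabs a" using Tm_abs[OF F s0] v by simp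
    also have "... \<le> c" using ab by (simp add: c_def)
    finally have vq: "vabs v \<le> q" using Tm_reflect[OF F s0] q by simp
    have q0: "0 \<le> q" using vabs_nonneg[of v] vq by simp
    have cq: "c * q = q * c"
    proof (rule Tm_inj[OF F s0])
      have "Tm s (c * q) = c * (q + s * q)" unfolding Tm_def sc by (simp add: algebra_simps mult.assoc)
      also have "... = c * c" using q by (simp add: Tm_def)
      finally have e1: "Tm s (c * q) = c * c" .
      have "Tm s (q * c) = (q + s * q) * c" unfolding Tm_def by (simp add: algebra_simps mult.assoc)
      also have "... = c * c" using q by (simp add: Tm_def)
      finally show "Tm s (c * q) = Tm s (q * c)" using e1 by simp
    qed
    have qeq: "q + (c * c) * q = c" using q sc by (simp add: Tm_def)
    have qq: "q * q \<le> q" by (rule q_bounded[OF F S c0 q0 cq qeq])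
    have "vabs v * vabs v \<le> vabs v" by (rule dom_bounded[OF F S vabs_nonneg vq qq])
    hence "v * v \<le> (1::real) *\<^sub>R vabs v" using fa_square_abs[OF F, of v] by simp
    hence "v \<in> bounded_elements" unfolding bounded_elements_def by (intro CollectI exI[of _ "1::real"]) simp
    hence vB: "v \<in> B" using assms(6) by blast
    have "a = v + b * (b * v)" using v by (simp add: Tm_def s_def mult.assoc)
    thus "a \<in> B" using vB bB Badd Bmul by simp
  qed
  show ?thesis unfolding order_ideal_def using B0 Badd Bsc solid by blast
qed

end
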